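(* (I-optimality bounds.) In the setting of the context, every $I$-optimal design $\mathbf d^*$ with $\boldsymbol\Sigma^*=\mathbf M(\mathbf d^* )^{-1}=(c^*_{jk})$ satisfies, for all $j,k\in\{1,\dots,m\}$, $$|c^*_{jk}|\le\alpha\big[(\mathbf F\mathbf F')^{-1}_{jj}(\mathbf F\mathbf F')^{-1}_{kk}\big]^{1/2},$$ and for $j\ne k$, $$|c^*_{jk}|\le\frac{\alpha}{2}\lambda_{\max}\big(\mathbf E_{jk}'(\mathbf F\mathbf F')^{-1}\mathbf E_{jk}\big),$$ where $\alpha=\mathrm{tr}(\mathbf F'\mathbf M(\mathbf d_0)^{-1}\mathbf F)$.
   Context: $\mathbf f_1,\dots,\mathbf f_n\in\mathbb R^m$ span $\mathbb R^m$, $2\le m\le N\le n$, and $\mathbf F=(\mathbf f_1,\dots,\mathbf f_n)$ ($m\times n$). A (binary) design is $\mathbf d\in\{0,1\}^n$ with $\sum_i d_i=N$, with information matrix $\mathbf M(\mathbf d)=\sum_i d_i\mathbf f_i\mathbf f_i'$. An $I$-optimal design minimizes $\sum_{i=1}^n\mathbf f_i'\mathbf M(\mathbf d)^{-1}\mathbf f_i=\mathrm{tr}(\mathbf F'\mathbf M(\mathbf d)^{-1}\mathbf F)$ over designs with nonsingular $\mathbf M(\mathbf d)$. $\mathbf d_0$ is a design with nonsingular $\mathbf M(\mathbf d_0)$. $\mathbf E_{jk}=(\mathbf e_j,\mathbf e_k)$ with $\mathbf e_j$ the $j$-th unit vector; $\mathbf A_{jj}$ is the $(j,j)$ entry; $\lambda_{\max}$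 the largest eigenvalue. *)

theory Defs
  imports "HOL-Analysis.Analysis"
begin

text \<open>The model vectors f_1..f_n are the columns of F :: real^'n^'m
  (rows indexed by 'm, i.e. R^m; columns indexed by 'n, i.e. {1..n}).
  A design is a vector d in {0,1}^n with sum N.\<close>

definition is_design :: "nat \<Rightarrow> real^'n::finite \<Rightarrow> bool" where
  "is_design N d \<longleftrightarrow> (\<forall>i. d$i = 0 \<or> d$i = 1) \<and> (\<Sum>i\<in>UNIV. d$i) = real N"

definition info_mat :: "real^'n::finite^'m::finite \<Rightarrow> real^'n \<Rightarrow> real^'m^'m" where
  "info_mat F d = (\<Sum>i\<in>UNIV. d$i *\<^sub>R (\<chi> j k. (column i F)$j * (column i F)$k))"

definition I_crit :: "real^'n::finite^'m::finite \<Rightarrow> real^'n \<Rightarrow> real" where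
  "I_crit F d = trace (transpose F ** matrix_inv (info_mat F d) ** F)"

definition I_optimal :: "nat \<Rightarrow> real^'n::finite^'m::finite \<Rightarrow> real^'n \<Rightarrow> bool" where
  "I_optimal N F d \<longleftrightarrow> is_design N d \<and> invertible (info_mat F d) \<and>
     (\<forall>d'. is_design N d' \<and> invertible (info_mat F d') \<longrightarrow> I_crit F d \<le> I_crit F d')"

definition E_mat :: "'m::finite \<Rightarrow> 'm \<Rightarrow> real^2^'m" where
  "E_mat j k = (\<chi> r c. if c = 1 then (if r = j then 1 else 0) else (if r = k then 1 else 0))"

definition lambda_max :: "real^'a::finite^'a \<Rightarrow> real" where
  "lambda_max A = Max {l. \<exists>v. v \<noteq> 0 \<and> A *v v = l *\<^sub>R v}"

end

theory Submission
  imports Defs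
begin

lemma minv:
  fixes A :: "real^'m::finite^'m"
  assumes "invertible A"
  shows "A ** matrix_inv A = mat 1" "matrix_inv A ** A = mat 1"
  using someI_ex[OF assms[unfolded invertible_def]] unfolding matrix_inv_def by auto

lemma minv_sym:
  fixes A :: "real^'m::finite^'m"
  assumes "invertible A" "transpose A = A"
  shows "transpose (matrix_inv A) = matrix_inv A"
proof -
  let ?S = "matrix_inv A"
  have "transpose ?S ** A = mat 1"
    by (metis assms(2) matrix_transpose_mul minv(1)[OF assms(1)] transpose_mat)
  then have "transpose ?S = (transpose ?S ** A) ** ?S"
    by (metis matrix_mul_assoc matrix_mul_rid minv(1)[OF assms(1)])
  also have "\<dots> = ?S" using \<open>transpose ?S ** A = mat 1\<close> by (simp add: matrix_mul_lid)
  finally show ?thesis .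
qed

lemma sum3_rot: "(\<Sum>i\<in>A. \<Sum>j\<in>B. \<Sum>k\<in>C. f i j k) = (\<Sum>k\<in>C. \<Sum>i\<in>A. \<Sum>j\<in>B. f i j k)"
proof -
  have "(\<Sum>i\<in>A. \<Sum>j\<in>B. \<Sum>k\<in>C. f i j k) = (\<Sum>i\<in>A. \<Sum>k\<in>C. \<Sum>j\<in>B. f i j k)"
    by (rule sum.cong[OF refl], rule sum.swap)
  also have "\<dots> = (\<Sum>k\<in>C. \<Sum>i\<in>A. \<Sum>j\<in>B. f i j k)" by (rule sum.swap)
  finally show ?thesis .
qed

lemma info_entry: "info_mat F d $ j $ k = (\<Sum>i\<in>UNIV. d$i * (F$j$i * F$k$i))"
  unfolding info_mat_def by (simp add: sum_component column_def)

lemma info_sym: "transpose (info_mat F d) = info_mat F d"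
  by (simp add: vec_eq_iff transpose_def info_entry mult.commute)

lemma info_psd:
  fixes F :: "real^'n::finite^'m::finite"
  assumes "\<forall>i. 0 \<le> d$i"
  shows "0 \<le> x \<bullet> (info_mat F d *v x)"
proof -
  have "x \<bullet> (info_mat F d *v x) = (\<Sum>i\<in>UNIV. d$i * (\<Sum>j\<in>UNIV. F$j$i * x$j)^2)"
    by (simp add: inner_vec_def matrix_vector_mult_def info_entry sum_distrib_left
        sum_distrib_right power2_eq_square sum_product mult_ac)
       (subst sum3_rot, simp add: mult_ac)
  also have "\<dots> \<ge> 0" using assms by (intro sum_nonneg mult_nonneg_nonneg) auto
  finally show ?thesis .
qed

lemma inv_psd:
  fixes M :: "real^'m::finite^'m"
  assumes "invertible M" "\<forall>y. 0 \<le> y \<bullet> (M *v y)"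
  shows "0 \<le> x \<bullet> (matrix_inv M *v x)"
proof -
  have "M *v (matrix_inv M *v x) = x"
    by (simp add: matrix_vector_mul_assoc minv(1)[OF assms(1)])
  then have "x \<bullet> (matrix_inv M *v x) = (matrix_inv M *v x) \<bullet> (M *v (matrix_inv M *v x))"
    by (metis inner_commute)
  then show ?thesis using assms(2) by simp
qed

lemma quad_disc:
  fixes a b c :: real
  assumes "\<forall>t. 0 \<le> a + 2*t*b + t^2*c" "0 \<le> c"
  shows "b^2 \<le> a*c"
proof (cases "c = 0")
  case True
  show ?thesis
  proof (rule ccontr)
    assume "\<not> ?thesis"
    then have "b \<noteq> 0" using True by simp
    have "0 \<le> a + 2*(-(a+1)/(2*b))*b + (-(a+1)/(2*b))^2*c" using assms(1) by blast
    then show False using True \<open>b \<noteq> 0\<close> by (simp add: field_simps)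
  qed
next
  case False
  then have c: "c > 0" using assms(2) by simp
  have "0 \<le> a + 2*(-b/c)*b + (-b/c)^2*c" using assms(1) by blast
  also have "\<dots> = a - b^2/c" using c by (simp add: field_simps power2_eq_square)
  finally have "b^2/c \<le> a" by simp
  then show ?thesis using c by (simp add: field_simps mult.commute)
qed

lemma sym_bilin:
  fixes S :: "real^'m::finite^'m"
  assumes "transpose S = S"
  shows "v \<bullet> (S *v u) = u \<bullet> (S *v v)"
proof -
  have "v \<bullet> (S *v u) = v \<bullet> (transpose S *v u)" using assms by simp
  also have "\<dots> = (u v* S) \<bullet> v" by (simp add: inner_commute)
  also have "\<dots> = u \<bullet> (S *v v)" by (simp add: dot_lmul_matrix)
  finally show ?thesis .
qed

lemma cs_bilin:
  fixes S :: "real^'m::finite^'m"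
  assumes "transpose S = S" "\<forall>x. 0 \<le> x \<bullet> (S *v x)"
  shows "(u \<bullet> (S *v v))^2 \<le> (u \<bullet> (S *v u)) * (v \<bullet> (S *v v))"
proof (rule quad_disc)
  show "\<forall>t. 0 \<le> u \<bullet> (S *v u) + 2 * t * (u \<bullet> (S *v v)) + t\<^sup>2 * (v \<bullet> (S *v v))"
  proof
    fix t :: real
    have "(u + t *\<^sub>R v) \<bullet> (S *v (u + t *\<^sub>R v)) =
       u \<bullet> (S *v u) + t * (v \<bullet> (S *v u)) + t * (u \<bullet> (S *v v)) + t^2 * (v \<bullet> (S *v v))"
      by (simp add: matrix_vector_right_distrib matrix_scaleR_vector_ac scaleR_matrix_vector_assoc[symmetric]
          inner_add_left inner_add_right power2_eq_square algebra_simps)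
    then show "0 \<le> u \<bullet> (S *v u) + 2 * t * (u \<bullet> (S *v v)) + t\<^sup>2 * (v \<bullet> (S *v v))"
      using assms(2) sym_bilin[OF assms(1), of v u] by (metis mult_2 distrib_right mult.assoc add.assoc)
  qed
  show "0 \<le> v \<bullet> (S *v v)" using assms(2) by simp
qed

lemma trace_form:
  fixes F :: "real^'n::finite^'m::finite"
  shows "trace (transpose F ** S ** F) = (\<Sum>i\<in>UNIV. column i F \<bullet> (S *v column i F))"
  unfolding trace_def
  by (simp add: matrix_matrix_mult_def transpose_def column_def inner_vec_def matrix_vector_mult_def
      sum_distrib_left sum_distrib_right mult_ac)
     (rule sum.cong[OF refl], subst sum.swap, simp add: mult_ac)


lemma G_inv:
  fixes F :: "real^'n::finite^'m::finite"
  assumes span: "span (range (\<lambda>i. column i F)) = UNIV"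
  shows "invertible (F ** transpose F)"
  unfolding invertible_left_inverse matrix_left_invertible_ker
proof (intro allI impI)
  fix x :: "real^'m" assume "(F ** transpose F) *v x = 0"
  then have "x \<bullet> (F *v (transpose F *v x)) = 0" by (simp add: matrix_vector_mul_assoc[symmetric])
  then have "(x v* F) \<bullet> (x v* F) = 0" by (simp add: dot_lmul_matrix[symmetric])
  then have xF: "x v* F = 0" by simp
  have "\<And>y. y \<in> range (\<lambda>i. column i F) \<Longrightarrow> orthogonal x y"
  proof -
    fix y assume "y \<in> range (\<lambda>i. column i F)"
    then obtain i where "y = column i F" by auto
    have "(x v* F) $ i = x \<bullet> column i F"
      by (simp add: vector_matrix_mult_def inner_vec_def column_def)
    then show "orthogonal x y" using xF \<open>y = column i F\<close> by (simp add: orthogonal_def)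
  qed
  then have "orthogonal x x" using orthogonal_to_span[of x "range (\<lambda>i. column i F)" x] span by auto
  then show "x = 0" by (simp add: orthogonal_def)
qed

lemma core:
  fixes F :: "real^'n::finite^'m::finite" and S :: "real^'m^'m"
  assumes Ginv: "invertible (F ** transpose F)"
    and Ssym: "transpose S = S" and Spsd: "\<forall>x. 0 \<le> x \<bullet> (S *v x)"
  shows "x \<bullet> (S *v x) \<le> trace (transpose F ** S ** F) * (x \<bullet> (matrix_inv (F ** transpose F) *v x))"
    and "0 \<le> x \<bullet> (matrix_inv (F ** transpose F) *v x)"
    and "0 \<le> trace (transpose F ** S ** F)"
proof -
  define G where "G = F ** transpose F"
  define y where "y = matrix_inv G *v x"
  define a where "a = transpose F *v y"
  have xa: "x = F *v a"
  proof -
    have "F *v a = G *v y" unfolding a_def G_def by (simp only: matrix_vector_mul_assoc)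
    also have "\<dots> = (G ** matrix_inv G) *v x" unfolding y_def by (simp only: matrix_vector_mul_assoc)
    also have "\<dots> = x" using minv(1)[OF Ginv[folded G_def]] by simp
    finally show ?thesis by simp
  qed
  have Q: "x \<bullet> (matrix_inv G *v x) = (\<Sum>i\<in>UNIV. (a$i)^2)"
  proof -
    have "x \<bullet> (matrix_inv G *v x) = (F *v a) \<bullet> y" using xa y_def by simp
    also have "\<dots> = (y v* F) \<bullet> a" by (metis dot_lmul_matrix inner_commute)
    also have "\<dots> = a \<bullet> a" unfolding a_def by (simp add: inner_commute)
    finally show ?thesis by (simp add: inner_vec_def power2_eq_square)
  qed
  have Qnn: "0 \<le> x \<bullet> (matrix_inv G *v x)" unfolding Q by (simp add: sum_nonneg)
  have T: "trace (transpose F ** S ** F) = (\<Sum>i\<in>UNIV. column i F \<bullet> (S *v column i F))"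
    by (rule trace_form)
  have Tnn: "0 \<le> trace (transpose F ** S ** F)" unfolding T using Spsd by (simp add: sum_nonneg)
  define s where "s = x \<bullet> (S *v x)"
  have snn: "0 \<le> s" using Spsd s_def by simp
  define b where "b i = column i F \<bullet> (S *v x)" for i
  have sab: "s = (\<Sum>i\<in>UNIV. a$i * b i)"
  proof -
    have "s = (\<Sum>i\<in>UNIV. a$i *s column i F) \<bullet> (S *v x)" unfolding s_def
      using xa matrix_mult_sum[of F a] by simp
    also have "\<dots> = (\<Sum>i\<in>UNIV. a$i * b i)"
      by (simp add: inner_sum_left b_def scalar_mult_eq_scaleR)
    finally show ?thesis .
  qed
  have bb: "(b i)^2 \<le> (column i F \<bullet> (S *v column i F)) * s" for i
    unfolding b_def s_def by (rule cs_bilin[OF Ssym Spsd])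
  have "s^2 \<le> (\<Sum>i\<in>UNIV. (a$i)^2) * (\<Sum>i\<in>UNIV. (b i)^2)"
    unfolding sab by (rule Cauchy_Schwarz_ineq_sum)
  also have "\<dots> \<le> (\<Sum>i\<in>UNIV. (a$i)^2) * (\<Sum>i\<in>UNIV. (column i F \<bullet> (S *v column i F)) * s)"
    by (intro mult_left_mono sum_mono bb) (simp add: sum_nonneg)
  also have "\<dots> = (x \<bullet> (matrix_inv G *v x)) * trace (transpose F ** S ** F) * s"
    unfolding Q T by (simp add: sum_distrib_right[symmetric] mult.assoc)
  finally have ss: "s * s \<le> ((x \<bullet> (matrix_inv G *v x)) * trace (transpose F ** S ** F)) * s"
    by (simp add: power2_eq_square)
  have "s \<le> trace (transpose F ** S ** F) * (x \<bullet> (matrix_inv G *v x))"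
  proof (cases "s = 0")
    case True then show ?thesis using Qnn Tnn by simp
  next
    case False then have "s > 0" using snn by simp
    then show ?thesis using ss by (simp add: mult.commute)
  qed
  then show "x \<bullet> (S *v x) \<le> trace (transpose F ** S ** F) * (x \<bullet> (matrix_inv (F ** transpose F) *v x))"
    unfolding s_def G_def .
  show "0 \<le> x \<bullet> (matrix_inv (F ** transpose F) *v x)" using Qnn G_def by simp
  show "0 \<le> trace (transpose F ** S ** F)" by (rule Tnn)
qed

lemma entry_form:
  fixes A :: "real^'m::finite^'m"
  shows "axis j 1 \<bullet> (A *v axis k 1) = A$j$k"
  by (simp add: matrix_vector_mult_basis inner_axis' column_def)

lemma quad2:
  fixes A :: "real^'m::finite^'m"
  shows "(axis j 1 + c *\<^sub>R axis k 1) \<bullet> (A *v (axis j 1 + c *\<^sub>R axis k 1))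
     = A$j$j + c * A$j$k + c * A$k$j + c^2 * A$k$k"
  by (simp add: matrix_vector_right_distrib matrix_scaleR_vector_ac scaleR_matrix_vector_assoc[symmetric]
          inner_add_left inner_add_right entry_form power2_eq_square algebra_simps)

lemma E_col: "E_mat j k $ r $ 1 = (if r = j then 1 else 0)" "E_mat j k $ r $ 2 = (if r = k then 1 else 0)"
  by (simp_all add: E_mat_def)

lemma if01: "(if P then 1 else 0) * (x::real) = (if P then x else 0)" "x * (if P then 1 else 0) = (if P then x else 0)"
  by auto

lemma sandwich:
  fixes E :: "real^'a::finite^'m::finite" and B :: "real^'m^'m"
  shows "(transpose E ** B ** E) $ a $ b = column a E \<bullet> (B *v column b E)"
  by (simp add: matrix_matrix_mult_def transpose_def column_def inner_vec_def matrix_vector_mult_def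
      sum_distrib_left sum_distrib_right mult_ac)
     (subst sum.swap, simp add: mult_ac)

lemma E_columns: "column 1 (E_mat j k) = axis j 1" "column 2 (E_mat j k) = axis k 1"
  by (simp_all add: vec_eq_iff column_def E_mat_def axis_def)

lemma E_entries:
  fixes B :: "real^'m::finite^'m"
  shows "(transpose (E_mat j k) ** B ** E_mat j k) $ 1 $ 1 = B$j$j"
    "(transpose (E_mat j k) ** B ** E_mat j k) $ 1 $ 2 = B$j$k"
    "(transpose (E_mat j k) ** B ** E_mat j k) $ 2 $ 1 = B$k$j"
    "(transpose (E_mat j k) ** B ** E_mat j k) $ 2 $ 2 = B$k$k"
  by (simp_all add: sandwich E_columns entry_form)


lemma mv2: fixes B :: "real^2^2"
  shows "(B *v v) $ 1 = B$1$1 * v$1 + B$1$2 * v$2" "(B *v v) $ 2 = B$2$1 * v$1 + B$2$2 * v$2"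
  by (simp_all add: matrix_vector_mult_def sum_2)

lemma lam2:
  fixes B :: "real^2^2"
  assumes sym: "B$1$2 = B$2$1"
  shows "B$1$1 + B$2$2 + 2*\<bar>B$1$2\<bar> \<le> 2 * lambda_max B"
proof -
  define a where "a = B$1$1"
  define b where "b = B$1$2"
  define c where "c = B$2$2"
  define r where "r = sqrt ((a-c)^2 + 4*b^2)"
  define l0 where "l0 = (a+c+r)/2"
  define L where "L = {l. \<exists>v. v \<noteq> 0 \<and> B *v v = l *\<^sub>R v}"
  have b2: "B$2$1 = b" using sym b_def by simp
  have rnn: "0 \<le> r" unfolding r_def by simp
  have r2: "r^2 = (a-c)^2 + 4*b^2" unfolding r_def by (simp add: add_nonneg_nonneg)
  have sub: "L \<subseteq> {(a+c+r)/2, (a+c-r)/2}"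
  proof
    fix l assume "l \<in> L"
    then obtain v where v0: "v \<noteq> 0" and ev: "B *v v = l *\<^sub>R v" unfolding L_def by auto
    have e1: "a * v$1 + b * v$2 = l * v$1" using arg_cong[OF ev, of "\<lambda>w. w$1"] mv2(1)[of B v] a_def b_def by simp
    have e2: "b * v$1 + c * v$2 = l * v$2" using arg_cong[OF ev, of "\<lambda>w. w$2"] mv2(2)[of B v] c_def b2 by simp
    have z1: "((a-l)*(c-l) - b^2) * v$1 = 0"
    proof -
      have "(a-l)* v$1 = -b* v$2" using e1 by (simp add: algebra_simps)
      moreover have "(c-l)* v$2 = -b* v$1" using e2 by (simp add: algebra_simps)
      ultimately have "(c-l)*((a-l)* v$1) = (-b)*((c-l)* v$2)" by (metis mult.left_commute)
      also have "\<dots> = (-b)*(-b* v$1)" using \<open>(c-l)* v$2 = -b* v$1\<close> by (simp only:)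
      also have "\<dots> = b^2 * v$1" by (simp add: power2_eq_square)
      finally show ?thesis by (simp add: algebra_simps)
    qed
    have z2: "((a-l)*(c-l) - b^2) * v$2 = 0"
    proof -
      have "(a-l)* v$1 = -b* v$2" using e1 by (simp add: algebra_simps)
      moreover have "(c-l)* v$2 = -b* v$1" using e2 by (simp add: algebra_simps)
      ultimately have "(a-l)*((c-l)* v$2) = (-b)*((a-l)* v$1)" by (metis mult.left_commute)
      also have "\<dots> = (-b)*(-b* v$2)" using \<open>(a-l)* v$1 = -b* v$2\<close> by (simp only:)
      also have "\<dots> = b^2 * v$2" by (simp add: power2_eq_square)
      finally show ?thesis by (simp add: algebra_simps)
    qed
    have "v$1 \<noteq> 0 \<or> v$2 \<noteq> 0" using v0 by (auto simp: vec_eq_iff forall_2)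
    then have q: "(a-l)*(c-l) = b^2" using z1 z2 by auto
    have "(2*l - a - c)^2 = r^2" unfolding r2 using q by (simp add: power2_eq_square algebra_simps)
    then have "2*l - a - c = r \<or> 2*l - a - c = -r" by (simp add: power2_eq_iff)
    then show "l \<in> {(a+c+r)/2, (a+c-r)/2}" by auto
  qed
  then have fin: "finite L" by (rule finite_subset) simp
  have mem: "l0 \<in> L"
  proof (cases "b = 0")
    case False
    have key: "(l0-a)*(l0-c) = b^2"
    proof -
      have "4*((l0-a)*(l0-c)) = r^2 - (a-c)^2" unfolding l0_def by (simp add: power2_eq_square field_simps)
      then show ?thesis using r2 by simp
    qed
    let ?v = "vector [b, l0 - a] :: real^2"
    have "?v \<noteq> 0" using False by (metis vector_2(1) zero_index)
    moreover have "B *v ?v = l0 *\<^sub>R ?v"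
      unfolding vec_eq_iff forall_2 using key
      by (simp add: mv2 a_def[symmetric] b_def[symmetric] c_def[symmetric] b2 power2_eq_square algebra_simps)
    ultimately show ?thesis unfolding L_def by blast
  next
    case True
    then have rr: "r = \<bar>a - c\<bar>" unfolding r_def by simp
    show ?thesis
    proof (cases "c \<le> a")
      case ca: True
      let ?v = "vector [1, 0] :: real^2"
      have "?v \<noteq> 0" by (metis vector_2(1) zero_index zero_neq_one)
      moreover have "l0 = a" using ca rr l0_def by simp
      then have "B *v ?v = l0 *\<^sub>R ?v"
        unfolding vec_eq_iff forall_2 using True
        by (simp add: mv2 a_def[symmetric] b_def[symmetric] b2)
      ultimately show ?thesis unfolding L_def by blast
    next
      case ca: False
      let ?v = "vector [0, 1] :: real^2"
      have "?v \<noteq> 0" by (metis vector_2(2) zero_index zero_neq_one)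
      moreover have "l0 = c" using ca rr l0_def by simp
      then have "B *v ?v = l0 *\<^sub>R ?v"
        unfolding vec_eq_iff forall_2 using True
        by (simp add: mv2 c_def[symmetric] b_def[symmetric] b2)
      ultimately show ?thesis unfolding L_def by blast
    qed
  qed
  have "l0 \<le> lambda_max B" unfolding lambda_max_def using Max_ge[OF fin mem] L_def by simp
  moreover have "2*\<bar>b\<bar> \<le> r" unfolding r_def
    by (rule real_le_rsqrt) (simp add: power2_eq_square)
  ultimately show ?thesis unfolding l0_def a_def[symmetric] b_def[symmetric] c_def[symmetric] by simp
qed


theorem mainTheorem10:
  fixes F :: "real^'n::finite^'m::finite" and N :: nat and d0 dstar :: "real^'n"
  assumes span: "span (range (\<lambda>i. column i F)) = UNIV"
    and m2: "2 \<le> CARD('m)" and mN: "CARD('m) \<le> N" and Nn: "N \<le> CARD('n)"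
    and d0: "is_design N d0" and d0inv: "invertible (info_mat F d0)"
    and opt: "I_optimal N F dstar"
  shows "(\<forall>j k. \<bar>matrix_inv (info_mat F dstar) $ j $ k\<bar> \<le>
            I_crit F d0 * sqrt (matrix_inv (F ** transpose F) $ j $ j
                                * matrix_inv (F ** transpose F) $ k $ k))
       \<and> (\<forall>j k. j \<noteq> k \<longrightarrow> \<bar>matrix_inv (info_mat F dstar) $ j $ k\<bar> \<le>
            I_crit F d0 / 2 * lambda_max (transpose (E_mat j k) ** matrix_inv (F ** transpose F) ** E_mat j k))"
proof -
  define M where "M = info_mat F dstar"
  define S where "S = matrix_inv M"
  define G where "G = F ** transpose F"
  define Gi where "Gi = matrix_inv G"
  define \<alpha> where "\<alpha> = I_crit F d0"
  have des: "is_design N dstar" and Minv: "invertible M" and optd0: "I_crit F dstar \<le> \<alpha>"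
    using opt d0 d0inv unfolding I_optimal_def M_def \<alpha>_def by auto
  have dnn: "\<forall>i. 0 \<le> dstar$i" using des unfolding is_design_def by (metis order.refl zero_le_one)
  have Msym: "transpose M = M" unfolding M_def by (rule info_sym)
  have Mpsd: "\<forall>y. 0 \<le> y \<bullet> (M *v y)" unfolding M_def using info_psd[OF dnn] by blast
  have Ssym: "transpose S = S" unfolding S_def by (rule minv_sym[OF Minv Msym])
  have Spsd: "\<forall>x. 0 \<le> x \<bullet> (S *v x)" unfolding S_def using inv_psd[OF Minv Mpsd] by blast
  have Ginv: "invertible G" unfolding G_def by (rule G_inv[OF span])
  have Gsym: "transpose G = G" unfolding G_def by (simp add: matrix_transpose_mul)
  have Gisym: "transpose Gi = Gi" unfolding Gi_def by (rule minv_sym[OF Ginv Gsym])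
  have crit: "I_crit F dstar = trace (transpose F ** S ** F)"
    unfolding I_crit_def S_def M_def ..
  have Tnn: "0 \<le> trace (transpose F ** S ** F)" by (rule core(3)[OF Ginv[unfolded G_def] Ssym Spsd])
  have anl: "0 \<le> \<alpha>" using Tnn optd0 crit by simp
  have qnn: "0 \<le> x \<bullet> (Gi *v x)" for x
    unfolding Gi_def G_def by (rule core(2)[OF Ginv[unfolded G_def] Ssym Spsd])
  have key: "x \<bullet> (S *v x) \<le> \<alpha> * (x \<bullet> (Gi *v x))" for x
  proof -
    have "x \<bullet> (S *v x) \<le> trace (transpose F ** S ** F) * (x \<bullet> (Gi *v x))"
      unfolding Gi_def G_def by (rule core(1)[OF Ginv[unfolded G_def] Ssym Spsd])
    also have "\<dots> \<le> \<alpha> * (x \<bullet> (Gi *v x))"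
      using optd0 crit qnn[of x] by (intro mult_right_mono) auto
    finally show ?thesis .
  qed
  have Sjk: "S$k$j = S$j$k" for j k using Ssym by (metis transpose_def vec_lambda_beta)
  have Gjk: "Gi$k$j = Gi$j$k" for j k using Gisym by (metis transpose_def vec_lambda_beta)
  have diagS: "S$j$j \<le> \<alpha> * Gi$j$j" for j using key[of "axis j 1"] by (simp add: entry_form)
  have diagSnn: "0 \<le> S$j$j" for j using Spsd[rule_format, of "axis j 1"] by (simp add: entry_form)
  have diagGnn: "0 \<le> Gi$j$j" for j using qnn[of "axis j 1"] by (simp add: entry_form)
  have part1: "\<bar>S$j$k\<bar> \<le> \<alpha> * sqrt (Gi$j$j * Gi$k$k)" for j k
  proof -
    have "(S$j$k)^2 \<le> S$j$j * S$k$k"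
      using cs_bilin[OF Ssym Spsd, of "axis j 1" "axis k 1"] by (simp add: entry_form)
    also have "\<dots> \<le> (\<alpha> * Gi$j$j) * (\<alpha> * Gi$k$k)"
      using diagS diagSnn by (intro mult_mono) (auto intro: order_trans)
    also have "\<dots> = \<alpha>^2 * (Gi$j$j * Gi$k$k)" by (simp add: power2_eq_square mult_ac)
    finally have "sqrt ((S$j$k)^2) \<le> sqrt (\<alpha>^2 * (Gi$j$j * Gi$k$k))" by (rule real_sqrt_le_mono)
    then show ?thesis using anl by (simp add: real_sqrt_mult)
  qed
  have part2: "\<bar>S$j$k\<bar> \<le> \<alpha> / 2 * lambda_max (transpose (E_mat j k) ** Gi ** E_mat j k)" for j k
  proof -
    define lam where "lam = lambda_max (transpose (E_mat j k) ** Gi ** E_mat j k)"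
    have L: "Gi$j$j + Gi$k$k + 2*\<bar>Gi$j$k\<bar> \<le> 2 * lam"
      using lam2[of "transpose (E_mat j k) ** Gi ** E_mat j k"] unfolding lam_def
      by (simp add: E_entries Gjk)
    have sx: "(axis j 1 + 1 *\<^sub>R axis k 1) \<bullet> (S *v (axis j 1 + 1 *\<^sub>R axis k 1)) = S$j$j + 2*S$j$k + S$k$k"
      using quad2[of j 1 k S] Sjk[of j k] by simp
    have sy: "(axis j 1 + (-1) *\<^sub>R axis k 1) \<bullet> (S *v (axis j 1 + (-1) *\<^sub>R axis k 1)) = S$j$j - 2*S$j$k + S$k$k"
      using quad2[of j "-1" k S] Sjk[of j k] by simp
    have gx: "(axis j 1 + 1 *\<^sub>R axis k 1) \<bullet> (Gi *v (axis j 1 + 1 *\<^sub>R axis k 1)) = Gi$j$j + 2*Gi$j$k + Gi$k$k"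
      using quad2[of j 1 k Gi] Gjk[of j k] by simp
    have gy: "(axis j 1 + (-1) *\<^sub>R axis k 1) \<bullet> (Gi *v (axis j 1 + (-1) *\<^sub>R axis k 1)) = Gi$j$j - 2*Gi$j$k + Gi$k$k"
      using quad2[of j "-1" k Gi] Gjk[of j k] by simp
    have kx: "S$j$j + 2*S$j$k + S$k$k \<le> \<alpha> * (Gi$j$j + 2*Gi$j$k + Gi$k$k)"
      using key[of "axis j 1 + 1 *\<^sub>R axis k 1"] sx gx by simp
    have ky: "S$j$j - 2*S$j$k + S$k$k \<le> \<alpha> * (Gi$j$j - 2*Gi$j$k + Gi$k$k)"
      using key[of "axis j 1 + (-1) *\<^sub>R axis k 1"] sy gy by simp
    have px: "0 \<le> S$j$j + 2*S$j$k + S$k$k"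
      using Spsd[rule_format, of "axis j 1 + 1 *\<^sub>R axis k 1"] sx by simp
    have py: "0 \<le> S$j$j - 2*S$j$k + S$k$k"
      using Spsd[rule_format, of "axis j 1 + (-1) *\<^sub>R axis k 1"] sy by simp
    have g1: "\<alpha> * (Gi$j$j + 2*Gi$j$k + Gi$k$k) \<le> \<alpha> * (2*lam)"
      using L anl by (intro mult_left_mono) auto
    have g2: "\<alpha> * (Gi$j$j - 2*Gi$j$k + Gi$k$k) \<le> \<alpha> * (2*lam)"
      using L anl by (intro mult_left_mono) auto
    have "4 * \<bar>S$j$k\<bar> \<le> \<alpha> * (2*lam)" using kx ky px py g1 g2 by linarith
    then show ?thesis unfolding lam_def by (simp add: field_simps)
  qed
  show ?thesis using part1 part2 unfolding S_def M_def Gi_def G_def \<alpha>_def by blast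
qed

end
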